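(* Let $0<t<1$ and $\alpha>0$. Define $H^{t}:\mathbb{R}\to\mathbb{R}$ by $H^{t}(p)=0$ if $p=0$, $H^{t}(p)=t$ if $0<|p|\le 1$, and $H^{t}(p)=1$ if $|p|>1$. Let $x\in\mathbb{R}$ with $|x|\ge 1$, and consider the function $E(p)=(x-p)^{2}+\alpha H^{t}(p)$ of $p\in\mathbb{R}$. Then $E$ attains its global minimum over $p\in\mathbb{R}$ at $$p=\begin{cases}0 & \text{if } |x|\le \min\!\left(\frac{1+\alpha t}{2},\sqrt{\alpha}\right),\\ \operatorname{sgn}(x) & \text{if } \frac{1+\alpha t}{2}<|x|\le 1+\sqrt{\alpha(1-t)},\\ x & \text{if } |x|>\max\!\left(1+\sqrt{\alpha(1-t)},\sqrt{\alpha}\right).\end{cases}$$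
   Context: $\operatorname{sgn}(x)$ denotes the sign of $x$ ($1$ if $x>0$, $-1$ if $x<0$). The function $H^{t}$ is the per-entry penalty of the "$l_0^t$ measure", which counts entries of absolute value greater than $1$ with weight $1$ and nonzero entries of absolute value at most $1$ with weight $t$. *)

theory Defs
  imports Complex_Main
begin

definition Ht :: "real \<Rightarrow> real \<Rightarrow> real" where
  "Ht t p = (if p = 0 then 0 else if \<bar>p\<bar> \<le> 1 then t else 1)"

end

theory Submission
  imports Defs
begin

lemma keyq:
  fixes x q :: real
  assumes "\<bar>x\<bar> \<ge> 1" "\<bar>q\<bar> \<le> 1"
  shows "(\<bar>x\<bar> - 1)\<^sup>2 \<le> (x - q)\<^sup>2"
proof -
  have "0 \<le> \<bar>x\<bar> - 1" using assms by simp
  moreover have "\<bar>x\<bar> - 1 \<le> \<bar>x - q\<bar>" using assms by linarith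
  ultimately have "(\<bar>x\<bar> - 1)\<^sup>2 \<le> \<bar>x - q\<bar>\<^sup>2" by (intro power_mono) auto
  then show ?thesis by simp
qed

lemma sgnE:
  fixes x :: real
  assumes "\<bar>x\<bar> \<ge> 1"
  shows "(x - sgn x)\<^sup>2 = (\<bar>x\<bar> - 1)\<^sup>2" "sgn x \<noteq> 0" "\<bar>sgn x\<bar> \<le> 1"
  using assms by (auto simp: sgn_if power2_eq_square algebra_simps)

theorem theorem3p1:
  fixes t \<alpha> x :: real
  assumes "0 < t" "t < 1" "0 < \<alpha>" "\<bar>x\<bar> \<ge> 1"
  defines "E \<equiv> (\<lambda>p. (x - p)\<^sup>2 + \<alpha> * Ht t p)"
  shows "(\<bar>x\<bar> \<le> min ((1 + \<alpha> * t) / 2) (sqrt \<alpha>) \<longrightarrow> (\<forall>q. E 0 \<le> E q))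
       \<and> ((1 + \<alpha> * t) / 2 < \<bar>x\<bar> \<and> \<bar>x\<bar> \<le> 1 + sqrt (\<alpha> * (1 - t)) \<longrightarrow> (\<forall>q. E (sgn x) \<le> E q))
       \<and> (\<bar>x\<bar> > max (1 + sqrt (\<alpha> * (1 - t))) (sqrt \<alpha>) \<longrightarrow> (\<forall>q. E x \<le> E q))"
proof -
  have xx: "x\<^sup>2 = \<bar>x\<bar>\<^sup>2" by simp
  have sq: "(\<bar>x\<bar> - 1)\<^sup>2 = x\<^sup>2 - 2 * \<bar>x\<bar> + 1" by (simp add: power2_eq_square algebra_simps)
  have s2: "(sqrt \<alpha>)\<^sup>2 = \<alpha>" using assms by simp
  have r2: "(sqrt (\<alpha> * (1 - t)))\<^sup>2 = \<alpha> * (1 - t)" using assms by simp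
  have sg: "(x - sgn x)\<^sup>2 = (\<bar>x\<bar> - 1)\<^sup>2" "sgn x \<noteq> 0" "\<bar>sgn x\<bar> \<le> 1"
    using sgnE[OF assms(4)] by auto
  have Esg: "E (sgn x) = (\<bar>x\<bar> - 1)\<^sup>2 + \<alpha> * t" using sg by (simp add: E_def Ht_def)
  have E0: "E 0 = x\<^sup>2" by (simp add: E_def Ht_def)
  have Eq: "E q \<ge> min (x\<^sup>2) (min ((\<bar>x\<bar> - 1)\<^sup>2 + \<alpha> * t) \<alpha>)" for q
  proof (cases "q = 0")
    case True then show ?thesis using E0 by simp
  next
    case False
    show ?thesis
    proof (cases "\<bar>q\<bar> \<le> 1")
      case True
      then have "E q = (x - q)\<^sup>2 + \<alpha> * t" using False by (simp add: E_def Ht_def)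
      then show ?thesis using keyq[OF assms(4) True] by linarith
    next
      case F2: False
      then have "E q = (x - q)\<^sup>2 + \<alpha>" using False by (simp add: E_def Ht_def)
      moreover have "(x - q)\<^sup>2 \<ge> 0" by simp
      ultimately show ?thesis by linarith
    qed
  qed
  have Eq2: "E q \<ge> min (x\<^sup>2) (min ((\<bar>x\<bar> - 1)\<^sup>2 + \<alpha> * t) ((x-q)\<^sup>2 + \<alpha>))" for q
  proof (cases "q = 0")
    case True then show ?thesis using E0 by simp
  next
    case False
    show ?thesis
    proof (cases "\<bar>q\<bar> \<le> 1")
      case True
      then have "E q = (x - q)\<^sup>2 + \<alpha> * t" using False by (simp add: E_def Ht_def)
      then show ?thesis using keyq[OF assms(4) True] by linarith
    next
      case F2: False
      then have "E q = (x - q)\<^sup>2 + \<alpha>" using False by (simp add: E_def Ht_def)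
      then show ?thesis by linarith
    qed
  qed
  have c1: "\<forall>q. E 0 \<le> E q" if h: "\<bar>x\<bar> \<le> min ((1 + \<alpha> * t) / 2) (sqrt \<alpha>)"
  proof
    fix q
    have "\<bar>x\<bar>\<^sup>2 \<le> (sqrt \<alpha>)\<^sup>2" using h assms(4) by (intro power_mono) auto
    then have "x\<^sup>2 \<le> \<alpha>" using s2 by simp
    moreover have "x\<^sup>2 \<le> (\<bar>x\<bar> - 1)\<^sup>2 + \<alpha> * t" using h sq by auto
    ultimately show "E 0 \<le> E q" using Eq[of q] E0 by linarith
  qed
  have c2: "\<forall>q. E (sgn x) \<le> E q"
    if h: "(1 + \<alpha> * t) / 2 < \<bar>x\<bar> \<and> \<bar>x\<bar> \<le> 1 + sqrt (\<alpha> * (1 - t))"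
  proof
    fix q
    have "(\<bar>x\<bar> - 1)\<^sup>2 \<le> (sqrt (\<alpha> * (1 - t)))\<^sup>2" using h assms(4) by (intro power_mono) auto
    then have "(\<bar>x\<bar> - 1)\<^sup>2 \<le> \<alpha> - \<alpha> * t" using r2 by (simp add: algebra_simps)
    moreover have "(x-q)\<^sup>2 \<ge> 0" by simp
    ultimately have a: "(\<bar>x\<bar> - 1)\<^sup>2 + \<alpha> * t \<le> (x-q)\<^sup>2 + \<alpha>" by linarith
    have b: "(\<bar>x\<bar> - 1)\<^sup>2 + \<alpha> * t \<le> x\<^sup>2" using h sq by auto
    have "(x-q)\<^sup>2 \<ge> 0" by simp
    show "E (sgn x) \<le> E q" using Eq2[of q] Esg a b by linarith
  qed
  have c3: "\<forall>q. E x \<le> E q"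
    if h: "\<bar>x\<bar> > max (1 + sqrt (\<alpha> * (1 - t))) (sqrt \<alpha>)"
  proof
    fix q
    have z: "sqrt (\<alpha> * (1 - t)) \<ge> 0" using assms by simp
    have "1 + sqrt (\<alpha> * (1 - t)) < \<bar>x\<bar>" using h by (rule max.strict_boundedE)
    then have "\<bar>x\<bar> > 1" using z by linarith
    then have Ex: "E x = \<alpha>" by (auto simp: E_def Ht_def)
    have h1: "sqrt (\<alpha> * (1 - t)) \<le> \<bar>x\<bar> - 1" using \<open>1 + sqrt (\<alpha> * (1 - t)) < \<bar>x\<bar>\<close> by linarith
    have "(sqrt (\<alpha> * (1 - t)))\<^sup>2 \<le> (\<bar>x\<bar> - 1)\<^sup>2" by (rule power_mono[OF h1 z])
    then have "\<alpha> - \<alpha> * t \<le> (\<bar>x\<bar> - 1)\<^sup>2" using r2 by (simp add: algebra_simps)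
    then have a: "\<alpha> \<le> (\<bar>x\<bar> - 1)\<^sup>2 + \<alpha> * t" by linarith
    have h2: "sqrt \<alpha> \<le> \<bar>x\<bar>" using h by simp
    have "(sqrt \<alpha>)\<^sup>2 \<le> \<bar>x\<bar>\<^sup>2" by (rule power_mono[OF h2]) (use assms in simp)
    then have b: "\<alpha> \<le> x\<^sup>2" using s2 by simp
    show "E x \<le> E q" using Eq[of q] Ex a b by linarith
  qed
  show ?thesis using c1 c2 c3 by blast
qed

end
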